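(* Let $M$ be a modular lattice of finite length. Then $S^\delta(M)=\{a\in M: a^{+*}=a\}$, and the maps $x\mapsto x^*$ from $S(M)$ to $S^\delta(M)$ and $a\mapsto a^+$ from $S^\delta(M)$ to $S(M)$ are mutually inverse order isomorphisms (with both sets ordered as in $M$); in particular $S(M)$ and $S^\delta(M)$ are isomorphic lattices.
   Context: $M$ is a modular lattice of finite length (every chain finite) with least element $0$ and greatest element $1$. For $a\in M$: $a^*$ is the join of all elements covering $a$ if $a<1$, and $1^*=1$; $a^+$ is the meet of all elements covered by $a$ if $a>0$, and $0^+=0$; $a^{+*}=(a^+)^*$. An interval $[a,b]$ is \emph{atomistic} if every element of it is a join of atoms of $[a,b]$ (elements covering $a$). The \emph{skeleton} $S(M)$ is the set of least elements of the maximal (under inclusion) atomistic intervals of $M$; the \emph{dual skeleton} $S^\delta(M)$ is the set of greatest elements of the maximal atomistic intervals of $M$. *)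

theory Defs
  imports Main
begin

text \<open>A lattice of finite length is complete, so we work in a complete lattice type;
  its Sup/Inf are then the (unique) joins/meets determined by the order.\<close>

definition modular_lattice :: "'a::lattice itself \<Rightarrow> bool" where
  "modular_lattice _ \<longleftrightarrow> (\<forall>x y z :: 'a. x \<le> z \<longrightarrow> sup x (inf y z) = inf (sup x y) z)"

definition finite_length :: "'a::order itself \<Rightarrow> bool" where
  "finite_length _ \<longleftrightarrow> (\<forall>C :: 'a set. (\<forall>x\<in>C. \<forall>y\<in>C. x \<le> y \<or> y \<le> x) \<longrightarrow> finite C)"

definition covers :: "'a::order \<Rightarrow> 'a \<Rightarrow> bool" where
  "covers a b \<longleftrightarrow> a < b \<and> \<not> (\<exists>c. a < c \<and> c < b)"

definition star :: "'a::complete_lattice \<Rightarrow> 'a" where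
  "star a = (if a = top then top else Sup {b. covers a b})"

definition plus :: "'a::complete_lattice \<Rightarrow> 'a" where
  "plus a = (if a = bot then bot else Inf {b. covers b a})"

definition interval :: "'a::order \<Rightarrow> 'a \<Rightarrow> 'a set" where
  "interval a b = {x. a \<le> x \<and> x \<le> b}"

text \<open>Atomistic interval [a,b]: every element is a join (taken in [a,b], so the empty
  join is a) of atoms of [a,b].\<close>
definition atomistic :: "'a::complete_lattice \<Rightarrow> 'a \<Rightarrow> bool" where
  "atomistic a b \<longleftrightarrow> a \<le> b \<and>
     (\<forall>x\<in>interval a b. \<exists>A. A \<subseteq> {p. covers a p \<and> p \<le> b} \<and> x = sup a (Sup A))"

definition max_atomistic :: "'a::complete_lattice \<Rightarrow> 'a \<Rightarrow> bool" where
  "max_atomistic a b \<longleftrightarrow> atomistic a b \<and>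
     (\<forall>c d. atomistic c d \<and> interval a b \<subseteq> interval c d \<longrightarrow> interval a b = interval c d)"

definition skeleton :: "'a::complete_lattice set" where
  "skeleton = {a. \<exists>b. max_atomistic a b}"

definition dual_skeleton :: "'a::complete_lattice set" where
  "dual_skeleton = {b. \<exists>a. max_atomistic a b}"

end

theory Submission
  imports Defs
begin

unbundle lattice_syntax

definition cpl :: "'a::lattice \<Rightarrow> 'a \<Rightarrow> bool" where
  "cpl a b \<longleftrightarrow> a \<le> b \<and> (\<forall>x. a \<le> x \<and> x \<le> b \<longrightarrow> (\<exists>y. a \<le> y \<and> y \<le> b \<and> x \<sqinter> y = a \<and> x \<squnion> y = b))"

lemma interval_sub: "(a::'a::order) \<le> b \<Longrightarrow> interval a b \<subseteq> interval c d \<longleftrightarrow> c \<le> a \<and> b \<le> d"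
  unfolding interval_def by (auto intro: order_trans)

lemma interval_eq: "(a::'a::order) \<le> b \<Longrightarrow> interval a b = interval c d \<Longrightarrow> a = c \<and> b = d"
  by (metis interval_sub order.trans order_antisym order_refl)

lemma chain_of_seq:
  fixes f :: "nat \<Rightarrow> 'a::order"
  assumes "\<And>i. f (Suc i) < f i"
  shows "i < j \<Longrightarrow> f j < f i"
proof (induction j)
  case 0 then show ?case by simp
next
  case (Suc j) then show ?case using assms[of j] less_Suc_eq by (metis order.strict_trans)
qed

lemma chain_of_seq':
  fixes f :: "nat \<Rightarrow> 'a::order"
  assumes "\<And>i. f i < f (Suc i)"
  shows "i < j \<Longrightarrow> f i < f j"
proof (induction j)
  case 0 then show ?case by simp
next
  case (Suc j) then show ?case using assms[of j] less_Suc_eq by (metis order.strict_trans)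
qed

context
  assumes md: "modular_lattice TYPE('a::complete_lattice)"
    and fl: "finite_length TYPE('a)"
begin

lemma modl: "(x::'a) \<le> z \<Longrightarrow> x \<squnion> (y \<sqinter> z) = (x \<squnion> y) \<sqinter> z"
  using md unfolding modular_lattice_def by blast

lemma chain_fin: "(\<forall>x\<in>C. \<forall>y\<in>C. x \<le> y \<or> y \<le> x) \<Longrightarrow> finite (C::'a set)"
  using fl unfolding finite_length_def by blast

lemma wf_less: "wf {(x::'a, y). x < y}"
proof -
  { fix f :: "nat \<Rightarrow> 'a" assume f: "\<forall>i. f (Suc i) < f i"
    have lt: "i < j \<Longrightarrow> f j < f i" for i j using chain_of_seq[of f] f by blast
    have "inj f" unfolding inj_def by (metis lt less_irrefl nat_neq_iff)
    hence "infinite (range f)" using finite_imageD infinite_UNIV_nat by blast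
    moreover have "\<forall>x\<in>range f. \<forall>y\<in>range f. x \<le> y \<or> y \<le> x"
      by (auto, metis lt less_imp_le nat_neq_iff order_refl)
    ultimately have False using chain_fin by blast }
  thus ?thesis unfolding wf_iff_no_infinite_down_chain by auto
qed

lemma wf_greater: "wf {(x::'a, y). y < x}"
proof -
  { fix f :: "nat \<Rightarrow> 'a" assume f: "\<forall>i. f i < f (Suc i)"
    have lt: "i < j \<Longrightarrow> f i < f j" for i j using chain_of_seq'[of f] f by blast
    have "inj f" unfolding inj_def by (metis lt less_irrefl nat_neq_iff)
    hence "infinite (range f)" using finite_imageD infinite_UNIV_nat by blast
    moreover have "\<forall>x\<in>range f. \<forall>y\<in>range f. x \<le> y \<or> y \<le> x"
      by (auto, metis lt less_imp_le nat_neq_iff order_refl)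
    ultimately have False using chain_fin by blast }
  thus ?thesis unfolding wf_iff_no_infinite_down_chain by auto
qed

lemma ex_min: "(x::'a) \<in> S \<Longrightarrow> \<exists>m\<in>S. \<forall>y\<in>S. \<not> y < m"
proof -
  assume "x \<in> S"
  from wfE_min[OF wf_less this] obtain z where "z \<in> S" "\<And>y. (y, z) \<in> {(x::'a, y). x < y} \<Longrightarrow> y \<notin> S"
    by metis
  thus ?thesis by auto
qed

lemma ex_max: "(x::'a) \<in> S \<Longrightarrow> \<exists>m\<in>S. \<forall>y\<in>S. \<not> m < y"
proof -
  assume "x \<in> S"
  from wfE_min[OF wf_greater this] obtain z where "z \<in> S" "\<And>y. (y, z) \<in> {(x::'a, y). y < x} \<Longrightarrow> y \<notin> S"
    by metis
  thus ?thesis by auto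
qed

lemma cov_ex: "(a::'a) < b \<Longrightarrow> \<exists>c. covers a c \<and> c \<le> b"
proof -
  assume "a < b"
  then obtain m where m: "m \<in> {c. a < c \<and> c \<le> b}" "\<forall>y\<in>{c. a < c \<and> c \<le> b}. \<not> y < m"
    using ex_min[of b "{c. a < c \<and> c \<le> b}"] by auto
  thus ?thesis unfolding covers_def by (metis mem_Collect_eq order.strict_implies_order order_trans)
qed

lemma cov_ex': "(a::'a) < b \<Longrightarrow> \<exists>c. covers c b \<and> a \<le> c"
proof -
  assume "a < b"
  then obtain m where m: "m \<in> {c. a \<le> c \<and> c < b}" "\<forall>y\<in>{c. a \<le> c \<and> c < b}. \<not> m < y"
    using ex_max[of a "{c. a \<le> c \<and> c < b}"] by auto
  thus ?thesis unfolding covers_def by (metis mem_Collect_eq order.strict_implies_order order_trans)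
qed

lemma le_star: "(a::'a) \<le> star a"
proof (cases "a = top")
  case True then show ?thesis by (simp add: star_def)
next
  case False
  then obtain c where "covers a c" using cov_ex[of a top] top.not_eq_extremum by blast
  have "c \<le> \<Squnion>{b. covers a b}" using \<open>covers a c\<close> by (simp add: Sup_upper)
  moreover have "a \<le> c" using \<open>covers a c\<close> by (simp add: covers_def less_imp_le)
  ultimately show ?thesis unfolding star_def using False by simp
qed

lemma plus_le: "plus (a::'a) \<le> a"
proof (cases "a = bot")
  case True then show ?thesis by (simp add: plus_def)
next
  case False
  then obtain c where "covers c a" using cov_ex'[of bot a] bot.not_eq_extremum by blast
  have "\<Sqinter>{b. covers b a} \<le> c" using \<open>covers c a\<close> by (simp add: Inf_lower)
  moreover have "c \<le> a" using \<open>covers c a\<close> by (simp add: covers_def less_imp_le)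
  ultimately show ?thesis unfolding plus_def using False by simp
qed

lemma atom_meet: "covers (a::'a) p \<Longrightarrow> a \<le> w \<Longrightarrow> p \<sqinter> w = a \<or> p \<le> w"
  unfolding covers_def by (metis inf.absorb_iff1 inf.orderE inf_le1 le_inf_iff order_le_less)

lemma coatom_join: "covers (d::'a) b \<Longrightarrow> w \<le> b \<Longrightarrow> d \<squnion> w = b \<or> w \<le> d"
  unfolding covers_def by (metis sup.absorb_iff1 sup.orderE sup_ge1 sup_least order_le_less)

lemma transp_up: "covers (a::'a) p \<Longrightarrow> a \<le> t \<Longrightarrow> \<not> p \<le> t \<Longrightarrow> covers t (t \<squnion> p)"
proof -
  assume ap: "covers a p" and at: "a \<le> t" and pt: "\<not> p \<le> t"
  have "t < t \<squnion> p" using pt by (metis sup_ge1 sup_ge2 order_le_less)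
  moreover have "\<not> (t < c \<and> c < t \<squnion> p)" for c
  proof
    assume c: "t < c \<and> c < t \<squnion> p"
    have "p \<sqinter> c = a \<or> p \<le> c" using atom_meet[OF ap, of c] at c by auto
    thus False
    proof
      assume "p \<sqinter> c = a"
      have "t \<squnion> (p \<sqinter> c) = (t \<squnion> p) \<sqinter> c" using modl[of t c p] c by auto
      hence "t \<squnion> a = c" using c \<open>p \<sqinter> c = a\<close> by (simp add: inf.absorb2 less_imp_le)
      thus False using at c by (simp add: sup.absorb1)
    next
      assume "p \<le> c" hence "t \<squnion> p \<le> c" using c by (simp add: less_imp_le)
      thus False using c by (meson leD)
    qed
  qed
  ultimately show ?thesis unfolding covers_def by blast
qed

lemma transp_down: "covers (d::'a) b \<Longrightarrow> t \<le> b \<Longrightarrow> \<not> t \<le> d \<Longrightarrow> covers (t \<sqinter> d) t"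
proof -
  assume db: "covers d b" and tb: "t \<le> b" and td: "\<not> t \<le> d"
  have "t \<sqinter> d < t" using td by (metis inf_le1 inf_le2 order_le_less)
  moreover have "\<not> (t \<sqinter> d < c \<and> c < t)" for c
  proof
    assume c: "t \<sqinter> d < c \<and> c < t"
    have "d \<squnion> c = b \<or> c \<le> d" using coatom_join[OF db, of c] tb c by auto
    thus False
    proof
      assume "d \<squnion> c = b"
      have "c \<squnion> (d \<sqinter> t) = (c \<squnion> d) \<sqinter> t" using modl[of c t d] c by auto
      hence "c = t" using c \<open>d \<squnion> c = b\<close> tb
        by (metis inf.absorb2 inf_commute less_imp_le sup.absorb1 sup_commute)
      thus False using c by simp
    next
      assume "c \<le> d" hence "c \<le> t \<sqinter> d" using c by (simp add: less_imp_le)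
      thus False using c by (meson leD)
    qed
  qed
  ultimately show ?thesis unfolding covers_def by blast
qed

lemma star_mono: "(x::'a) \<le> y \<Longrightarrow> star x \<le> star y"
proof (cases "y = top")
  case True then show ?thesis by (simp add: star_def)
next
  case yt: False
  assume xy: "x \<le> y"
  have xt: "x \<noteq> top" using xy yt by (auto simp: top_unique)
  have "c \<le> star y" if c: "covers x c" for c
  proof (cases "c \<le> y")
    case True then show ?thesis using le_star[of y] by (rule order_trans)
  next
    case False
    have "covers y (y \<squnion> c)" using transp_up[OF c xy False] .
    hence "y \<squnion> c \<le> \<Squnion>{b. covers y b}" by (intro Sup_upper) simp
    hence "y \<squnion> c \<le> star y" using yt by (simp add: star_def)
    thus ?thesis by simp
  qed
  hence "\<Squnion>{b. covers x b} \<le> star y" by (intro Sup_least) simp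
  then show ?thesis using xt by (simp add: star_def[of x])
qed

lemma plus_mono: "(x::'a) \<le> y \<Longrightarrow> plus x \<le> plus y"
proof (cases "x = bot")
  case True then show ?thesis by (simp add: plus_def)
next
  case xb: False
  assume xy: "x \<le> y"
  have yb: "y \<noteq> bot" using xy xb by (auto simp: bot_unique)
  have "plus x \<le> d" if d: "covers d y" for d
  proof (cases "x \<le> d")
    case True show ?thesis using plus_le[of x] True by (rule order_trans)
  next
    case False
    have "covers (x \<sqinter> d) x" using transp_down[OF d xy False] .
    hence "\<Sqinter>{b. covers b x} \<le> x \<sqinter> d" by (intro Inf_lower) simp
    hence "plus x \<le> x \<sqinter> d" using xb by (simp add: plus_def)
    thus ?thesis by simp
  qed
  hence "plus x \<le> \<Sqinter>{b. covers b y}" by (intro Inf_greatest) simp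
  then show ?thesis using yb by (simp add: plus_def[of y])
qed

lemma atomistic_le_star: "atomistic (a::'a) b \<Longrightarrow> b \<le> star a"
proof (cases "a = top")
  case True then show ?thesis by (simp add: star_def)
next
  case False
  assume at: "atomistic a b"
  then obtain A where A: "A \<subseteq> {p. covers a p \<and> p \<le> b}" "b = a \<squnion> \<Squnion>A"
    unfolding atomistic_def interval_def by auto
  have "\<Squnion>A \<le> \<Squnion>{p. covers a p}" using A(1) by (intro Sup_subset_mono) auto
  then show ?thesis using A(2) False le_star[of a] unfolding star_def by simp
qed

lemma gen_compl:
  assumes ab: "(a::'a) \<le> b" and B: "B \<subseteq> {p. covers a p \<and> p \<le> b}" and bB: "b \<le> a \<squnion> \<Squnion>B"
  shows "cpl a b"
  unfolding cpl_def
proof (intro conjI allI impI)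
  show "a \<le> b" by fact
  fix x assume x: "a \<le> x \<and> x \<le> b"
  define Y where "Y = {y. a \<le> y \<and> y \<le> b \<and> x \<sqinter> y = a}"
  have "a \<in> Y" using x ab unfolding Y_def by (simp add: inf.absorb2)
  then obtain y where y: "y \<in> Y" "\<forall>z\<in>Y. \<not> y < z" using ex_max by blast
  have yY: "a \<le> y" "y \<le> b" "x \<sqinter> y = a" using y(1) unfolding Y_def by auto
  have "p \<le> x \<squnion> y" if p: "p \<in> B" for p
  proof (rule ccontr)
    assume np: "\<not> p \<le> x \<squnion> y"
    have cp: "covers a p" and pb: "p \<le> b" using p B by auto
    have axy: "a \<le> x \<squnion> y" using yY by (simp add: le_supI2)
    have m: "p \<sqinter> (x \<squnion> y) = a" using atom_meet[OF cp axy] np by blast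
    have "y \<squnion> (p \<sqinter> (x \<squnion> y)) = (y \<squnion> p) \<sqinter> (x \<squnion> y)" using modl[of y "x \<squnion> y" p] by simp
    hence e: "(y \<squnion> p) \<sqinter> (x \<squnion> y) = y" using m yY by (simp add: sup.absorb1)
    have e': "(x \<squnion> y) \<sqinter> (y \<squnion> p) = y" by (metis e inf_commute)
    have "x \<sqinter> (y \<squnion> p) = x \<sqinter> ((x \<squnion> y) \<sqinter> (y \<squnion> p))" by (metis inf_assoc inf_sup_absorb)
    also have "\<dots> = x \<sqinter> y" using e' by simp
    finally have "x \<sqinter> (y \<squnion> p) = a" using yY by simp
    hence "y \<squnion> p \<in> Y" using yY pb unfolding Y_def by (simp add: le_supI1)
    moreover have "\<not> p \<le> y" using np le_supI2 by blast
    hence "y < y \<squnion> p" by (simp add: less_le_not_le)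
    ultimately show False using y(2) by blast
  qed
  hence "\<Squnion>B \<le> x \<squnion> y" by (simp add: Sup_least)
  moreover have "a \<le> x \<squnion> y" using x by (simp add: le_supI1)
  ultimately have "a \<squnion> \<Squnion>B \<le> x \<squnion> y" by simp
  with bB have "b \<le> x \<squnion> y" by (rule order_trans)
  hence "x \<squnion> y = b" using x yY by (simp add: order_antisym)
  thus "\<exists>y. a \<le> y \<and> y \<le> b \<and> x \<sqinter> y = a \<and> x \<squnion> y = b" using yY by blast
qed

lemma atom_compl: "atomistic (a::'a) b \<Longrightarrow> cpl a b"
proof -
  assume at: "atomistic a b"
  then have ab: "a \<le> b" unfolding atomistic_def by simp
  from at obtain A where A: "A \<subseteq> {p. covers a p \<and> p \<le> b}" "b = a \<squnion> \<Squnion>A"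
    unfolding atomistic_def interval_def by auto
  show ?thesis using gen_compl[OF ab A(1)] A(2) by simp
qed

lemma compl_star: "cpl (a::'a) (star a)"
proof -
  have "{p. covers a p} \<subseteq> {p. covers a p \<and> p \<le> star a}"
  proof
    fix p assume "p \<in> {p. covers a p}"
    hence cp: "covers a p" by simp
    hence "a \<noteq> top" unfolding covers_def using top.extremum_strict by blast
    thus "p \<in> {p. covers a p \<and> p \<le> star a}" using cp unfolding star_def by (simp add: Sup_upper)
  qed
  moreover have "star a \<le> a \<squnion> \<Squnion>{p. covers a p}" unfolding star_def by simp
  ultimately show ?thesis using gen_compl le_star by blast
qed

lemma compl_sub: "cpl (a::'a) b \<Longrightarrow> a \<le> c \<Longrightarrow> c \<le> b \<Longrightarrow> cpl a c"
  unfolding cpl_def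
proof (intro conjI allI impI)
  assume h: "a \<le> b \<and> (\<forall>x. a \<le> x \<and> x \<le> b \<longrightarrow> (\<exists>y. a \<le> y \<and> y \<le> b \<and> x \<sqinter> y = a \<and> x \<squnion> y = b))"
    and ac: "a \<le> c" and cb: "c \<le> b"
  show "a \<le> c" by fact
  fix x assume x: "a \<le> x \<and> x \<le> c"
  then obtain y where y: "a \<le> y" "y \<le> b" "x \<sqinter> y = a" "x \<squnion> y = b" using h cb by (meson order_trans)
  have "x \<sqinter> (y \<sqinter> c) = a" using y x by (metis inf.absorb1 inf_assoc inf_commute)
  moreover have "x \<squnion> (y \<sqinter> c) = c" using modl[of x c y] x y cb by (simp add: inf.absorb2)
  moreover have "a \<le> y \<sqinter> c" using y ac by simp
  ultimately show "\<exists>y. a \<le> y \<and> y \<le> c \<and> x \<sqinter> y = a \<and> x \<squnion> y = c" by (intro exI[of _ "y \<sqinter> c"]) auto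
qed

lemma compl_atom: "cpl (a::'a) b \<Longrightarrow> atomistic a b"
  unfolding atomistic_def
proof (intro conjI ballI)
  assume h: "cpl a b"
  show ab: "a \<le> b" using h unfolding cpl_def by simp
  fix x assume "x \<in> interval a b"
  hence x: "a \<le> x" "x \<le> b" unfolding interval_def by auto
  define A where "A = {p. covers a p \<and> p \<le> x}"
  define t where "t = a \<squnion> \<Squnion>A"
  have "\<Squnion>A \<le> x" by (rule Sup_least) (simp add: A_def)
  hence tx: "t \<le> x" unfolding t_def using x by simp
  have at: "a \<le> t" unfolding t_def by simp
  have tb: "t \<le> b" using tx x(2) by (rule order_trans)
  obtain y where y: "a \<le> y" "y \<le> b" "t \<sqinter> y = a" "t \<squnion> y = b"
    using h tb at unfolding cpl_def by blast
  have "t \<squnion> (y \<sqinter> x) = (t \<squnion> y) \<sqinter> x" using modl[OF tx] .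
  hence xe: "x = t \<squnion> (x \<sqinter> y)" using y(4) x(2) by (metis inf.absorb2 inf_commute)
  have "x \<sqinter> y = a"
  proof (rule ccontr)
    assume "x \<sqinter> y \<noteq> a"
    hence "a < x \<sqinter> y" using x y by (simp add: less_le)
    then obtain q where q: "covers a q" "q \<le> x \<sqinter> y" using cov_ex by blast
    hence "q \<in> A" unfolding A_def by simp
    hence "q \<le> t" unfolding t_def by (simp add: Sup_upper le_supI2)
    hence "q \<le> t \<sqinter> y" using q(2) by simp
    hence "q \<le> a" using y(3) by simp
    thus False using q(1) leD unfolding covers_def by blast
  qed
  hence "x = t" using xe at by (simp add: sup.absorb1)
  moreover have "A \<subseteq> {p. covers a p \<and> p \<le> b}" unfolding A_def using x by auto
  ultimately show "\<exists>A. A \<subseteq> {p. covers a p \<and> p \<le> b} \<and> x = a \<squnion> \<Squnion>A" unfolding t_def by blast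
qed

lemma compl_plus_le: "cpl (a::'a) b \<Longrightarrow> plus b \<le> a"
proof (cases "b = bot")
  case True then show ?thesis by (simp add: plus_def)
next
  case bb: False
  assume h: "cpl a b"
  have ab: "a \<le> b" using h unfolding cpl_def by simp
  define D where "D = {d. covers d b \<and> a \<le> d}"
  define t where "t = b \<sqinter> \<Sqinter>D"
  have "a \<le> \<Sqinter>D" by (rule Inf_greatest) (simp add: D_def)
  hence at: "a \<le> t" unfolding t_def using ab by simp
  have tb: "t \<le> b" unfolding t_def by simp
  obtain y where y: "a \<le> y" "y \<le> b" "t \<sqinter> y = a" "t \<squnion> y = b"
    using h at tb unfolding cpl_def by blast
  have "y = b"
  proof (rule ccontr)
    assume "y \<noteq> b"
    hence "y < b" using y by simp
    then obtain d where d: "covers d b" "y \<le> d" using cov_ex' by blast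
    hence "d \<in> D" unfolding D_def using y by auto
    hence "t \<le> d" unfolding t_def by (simp add: Inf_lower le_infI2)
    hence "t \<squnion> y \<le> d" using d(2) by simp
    hence "b \<le> d" using y(4) by simp
    thus False using d(1) leD unfolding covers_def by blast
  qed
  hence "t = a" using y tb by (simp add: inf.absorb1)
  moreover have "plus b \<le> \<Sqinter>D"
  proof -
    have "plus b = \<Sqinter>{d. covers d b}" using bb by (simp add: plus_def)
    moreover have "\<Sqinter>{d. covers d b} \<le> \<Sqinter>D" by (rule Inf_superset_mono) (auto simp: D_def)
    ultimately show ?thesis by simp
  qed
  hence "plus b \<le> t" unfolding t_def using plus_le[of b] by (simp add: le_infI)
  ultimately show ?thesis by simp
qed

lemma compl_plus: "cpl (plus (b::'a)) b"
  unfolding cpl_def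
proof (intro conjI allI impI)
  let ?c = "plus b"
  show "?c \<le> b" by (rule plus_le)
  fix x assume x: "?c \<le> x \<and> x \<le> b"
  define Y where "Y = {y. ?c \<le> y \<and> y \<le> b \<and> x \<squnion> y = b}"
  have "b \<in> Y" using x plus_le[of b] unfolding Y_def by (simp add: sup.absorb2)
  then obtain y where y: "y \<in> Y" "\<forall>z\<in>Y. \<not> z < y" using ex_min by blast
  have yY: "?c \<le> y" "y \<le> b" "x \<squnion> y = b" using y(1) unfolding Y_def by auto
  have "x \<sqinter> y \<le> ?c"
  proof (cases "b = bot")
    case True
    have "y = bot" using yY(2) True by (simp add: bot_unique)
    then show ?thesis by simp
  next
    case bb: False
    have "x \<sqinter> y \<le> d" if d: "covers d b" for d
    proof (rule ccontr)
      assume nd: "\<not> x \<sqinter> y \<le> d"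
      have xyb: "x \<sqinter> y \<le> b" using yY by (simp add: le_infI2)
      have j: "d \<squnion> (x \<sqinter> y) = b" using coatom_join[OF d xyb] nd by blast
      have cd: "?c \<le> d" unfolding plus_def using bb d by (simp add: Inf_lower)
      have "(x \<sqinter> y) \<squnion> (d \<sqinter> y) = ((x \<sqinter> y) \<squnion> d) \<sqinter> y" using modl[of "x \<sqinter> y" y d] by simp
      hence e: "(x \<sqinter> y) \<squnion> (d \<sqinter> y) = y" using j yY by (simp add: sup_commute inf.absorb2)
      have "x \<squnion> (y \<sqinter> d) = x \<squnion> ((x \<sqinter> y) \<squnion> (d \<sqinter> y))"
        by (metis sup_assoc sup_inf_absorb inf_commute)
      also have "\<dots> = b" using e yY by simp
      finally have "y \<sqinter> d \<in> Y" unfolding Y_def using yY cd by (simp add: le_infI1)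
      moreover have "\<not> y \<le> d" using nd by (meson inf_le2 order_trans)
      hence "y \<sqinter> d < y" by (simp add: less_le_not_le)
      ultimately show False using y(2) by blast
    qed
    then have "x \<sqinter> y \<le> \<Sqinter>{d. covers d b}" by (intro Inf_greatest) simp
    then show ?thesis using bb by (simp add: plus_def)
  qed
  hence "x \<sqinter> y = ?c" using x yY by (simp add: order_antisym)
  thus "\<exists>y. ?c \<le> y \<and> y \<le> b \<and> x \<sqinter> y = ?c \<and> x \<squnion> y = b" using yY by blast
qed

lemma max_atomistic_iff: "max_atomistic (a::'a) b \<longleftrightarrow> b = star a \<and> a = plus b"
proof
  assume h: "max_atomistic a b"
  hence at: "atomistic a b" unfolding max_atomistic_def by simp
  hence ab: "a \<le> b" unfolding atomistic_def by simp
  have mx: "\<And>c d. atomistic c d \<Longrightarrow> interval a b \<subseteq> interval c d \<Longrightarrow> interval a b = interval c d"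
    using h unfolding max_atomistic_def by simp
  have bs: "b \<le> star a" using atomistic_le_star[OF at] .
  have "atomistic a (star a)" using compl_atom[OF compl_star] .
  moreover have "interval a b \<subseteq> interval a (star a)" using interval_sub[OF ab] bs by simp
  ultimately have "interval a b = interval a (star a)" by (rule mx)
  hence b: "b = star a" using interval_eq[OF ab] by simp
  have pb: "plus b \<le> a" using compl_plus_le[OF atom_compl[OF at]] .
  have "atomistic (plus b) b" using compl_atom[OF compl_plus] .
  moreover have "interval a b \<subseteq> interval (plus b) b" using interval_sub[OF ab] pb by simp
  ultimately have "interval a b = interval (plus b) b" by (rule mx)
  hence "a = plus b" using interval_eq[OF ab] by simp
  with b show "b = star a \<and> a = plus b" by (intro conjI)
next
  assume h: "b = star a \<and> a = plus b"
  have hb: "b = star a" using h by (rule conjunct1)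
  have ha: "a = plus b" using h by (rule conjunct2)
  have ab: "a \<le> b" using le_star[of a] hb by simp
  have "atomistic a (star a)" using compl_atom[OF compl_star] .
  hence at: "atomistic a b" using hb by simp
  have mx2: "interval a b = interval c d" if cd: "atomistic c d" "interval a b \<subseteq> interval c d" for c d
  proof -
    have ca: "c \<le> a" and bd: "b \<le> d" using cd(2) interval_sub[OF ab] by auto
    have ds: "d \<le> star c" using atomistic_le_star[OF cd(1)] .
    have pd: "plus d \<le> c" using compl_plus_le[OF atom_compl[OF cd(1)]] .
    have "plus b \<le> plus d" using plus_mono[OF bd] .
    hence "plus b \<le> c" using pd by (rule order_trans)
    hence "a \<le> c" using ha by simp
    hence c: "c = a" using ca by simp
    hence "d \<le> b" using ds hb by simp
    hence "d = b" using bd by simp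
    with c show ?thesis by simp
  qed
  show "max_atomistic a b" unfolding max_atomistic_def
  proof (intro conjI allI impI)
    show "atomistic a b" by (rule at)
    fix c d assume "atomistic c d \<and> interval a b \<subseteq> interval c d"
    thus "interval a b = interval c d" using mx2 by simp
  qed
qed

lemma skel_eq: "(skeleton :: 'a set) = {a. plus (star a) = a}"
proof (rule set_eqI)
  fix a :: 'a
  show "a \<in> skeleton \<longleftrightarrow> a \<in> {a. plus (star a) = a}"
  proof
    assume "a \<in> skeleton"
    then obtain b where "max_atomistic a b" unfolding skeleton_def mem_Collect_eq by (rule exE)
    hence hh: "b = star a \<and> a = plus b" by (rule iffD1[OF max_atomistic_iff])
    have hb: "b = star a" using hh by (rule conjunct1)
    have ha: "a = plus b" using hh by (rule conjunct2)
    have "plus (star a) = plus b" by (simp only: hb)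
    hence "plus (star a) = a" using ha[symmetric] by (rule trans)
    thus "a \<in> {a. plus (star a) = a}" by simp
  next
    assume "a \<in> {a. plus (star a) = a}"
    hence "plus (star a) = a" by simp
    hence "a = plus (star a)" by (rule sym)
    hence "star a = star a \<and> a = plus (star a)" by (intro conjI refl)
    hence "max_atomistic a (star a)" by (rule iffD2[OF max_atomistic_iff])
    thus "a \<in> skeleton" unfolding skeleton_def mem_Collect_eq by (rule exI)
  qed
qed

lemma dskel_eq: "(dual_skeleton :: 'a set) = {a. star (plus a) = a}"
proof (rule set_eqI)
  fix b :: 'a
  show "b \<in> dual_skeleton \<longleftrightarrow> b \<in> {a. star (plus a) = a}"
  proof
    assume "b \<in> dual_skeleton"
    then obtain a where "max_atomistic a b" unfolding dual_skeleton_def mem_Collect_eq by (rule exE)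
    hence hh: "b = star a \<and> a = plus b" by (rule iffD1[OF max_atomistic_iff])
    have hb: "b = star a" using hh by (rule conjunct1)
    have ha: "a = plus b" using hh by (rule conjunct2)
    have "star (plus b) = star a" by (simp only: ha[symmetric])
    hence "star (plus b) = b" using hb[symmetric] by (rule trans)
    thus "b \<in> {a. star (plus a) = a}" by simp
  next
    assume "b \<in> {a. star (plus a) = a}"
    hence "star (plus b) = b" by simp
    hence "b = star (plus b)" by (rule sym)
    hence "b = star (plus b) \<and> plus b = plus b" by (intro conjI refl)
    hence "max_atomistic (plus b) b" by (rule iffD2[OF max_atomistic_iff])
    thus "b \<in> dual_skeleton" unfolding dual_skeleton_def mem_Collect_eq by (rule exI)
  qed
qed

end

theorem theorem6p4:
  assumes "modular_lattice TYPE('a::complete_lattice)"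
    and "finite_length TYPE('a)"
  shows "(dual_skeleton :: 'a set) = {a. star (plus a) = a}
    \<and> bij_betw star (skeleton :: 'a set) dual_skeleton
    \<and> bij_betw plus (dual_skeleton :: 'a set) skeleton
    \<and> (\<forall>x\<in>(skeleton :: 'a set). plus (star x) = x)
    \<and> (\<forall>a\<in>(dual_skeleton :: 'a set). star (plus a) = a)
    \<and> (\<forall>x\<in>(skeleton :: 'a set). \<forall>y\<in>skeleton. x \<le> y \<longleftrightarrow> star x \<le> star y)
    \<and> (\<forall>a\<in>(dual_skeleton :: 'a set). \<forall>b\<in>dual_skeleton. a \<le> b \<longleftrightarrow> plus a \<le> plus b)"
proof -
  note S = skel_eq[OF assms] and D = dskel_eq[OF assms]
  note sm = star_mono[OF assms] and pm = plus_mono[OF assms]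
  have b1: "bij_betw star (skeleton :: 'a set) dual_skeleton"
    by (rule bij_betw_byWitness[where f'=plus]) (auto simp: S D)
  have b2: "bij_betw plus (dual_skeleton :: 'a set) skeleton"
    by (rule bij_betw_byWitness[where f'=star]) (auto simp: S D)
  have o1: "\<forall>x\<in>(skeleton :: 'a set). \<forall>y\<in>skeleton. x \<le> y \<longleftrightarrow> star x \<le> star y"
  proof (intro ballI)
    fix x y :: 'a assume "x \<in> skeleton" "y \<in> skeleton"
    hence e: "plus (star x) = x" "plus (star y) = y" by (auto simp: S)
    show "x \<le> y \<longleftrightarrow> star x \<le> star y"
    proof
      assume "x \<le> y" thus "star x \<le> star y" by (rule sm)
    next
      assume "star x \<le> star y" hence "plus (star x) \<le> plus (star y)" by (rule pm)
      thus "x \<le> y" using e by simp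
    qed
  qed
  have o2: "\<forall>a\<in>(dual_skeleton :: 'a set). \<forall>b\<in>dual_skeleton. a \<le> b \<longleftrightarrow> plus a \<le> plus b"
  proof (intro ballI)
    fix x y :: 'a assume "x \<in> dual_skeleton" "y \<in> dual_skeleton"
    hence e: "star (plus x) = x" "star (plus y) = y" by (auto simp: D)
    show "x \<le> y \<longleftrightarrow> plus x \<le> plus y"
    proof
      assume "x \<le> y" thus "plus x \<le> plus y" by (rule pm)
    next
      assume "plus x \<le> plus y" hence "star (plus x) \<le> star (plus y)" by (rule sm)
      thus "x \<le> y" using e by simp
    qed
  qed
  have e1: "\<forall>x\<in>(skeleton :: 'a set). plus (star x) = x" by (simp add: S)
  have e2: "\<forall>a\<in>(dual_skeleton :: 'a set). star (plus a) = a" by (simp add: D)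
  show ?thesis by (intro conjI D b1 b2 e1 e2 o1 o2)
qed

end
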